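(* Let $f : \widehat{\mathbb{Z}} \to \widehat{\mathbb{Z}}$ be a congruence stable map. Then $f$ is profinite preperiodic.
   Context: $\mathbb{N} = \{1,2,\dots\}$, $\widehat{\mathbb{Z}} = \varprojlim_n \mathbb{Z}/n\mathbb{Z}$ (a complete metric space with its profinite topology); $s \equiv_n t$ means $s-t \in n\widehat{\mathbb{Z}}$; $\widehat{\cdot}:\mathbb{N}\to\widehat{\mathbb{Z}}$ is the natural embedding. For a continuous map $f:\widehat{\mathbb{Z}}\to\widehat{\mathbb{Z}}$, a map $P:\mathbb{N}\to\mathbb{N}$ is a period map of $f$ if $s \equiv_{P(n)} t$ implies $f(s) \equiv_n f(t)$ for all $s,t \in \widehat{\mathbb{Z}}$, $n \in \mathbb{N}$. A continuous $f$ is congruence stable if there exists a period map $P$ of $f$ such that for each $n \in \mathbb{N}$, $P^k(n) = P^{k+1}(n)$ for all sufficiently large $k$. A continuous map $f$ is profinite preperiodic if for every $x \in \widehat{\mathbb{Z}}$ the following holds: for every $s \in \widehat{\mathbb{Z}}$ and every sequence of positive integers $(n_i)$ with $n_i \to +\infty$ in $\mathbb{R}$ and $\widehat{n_i} \to s$ in $\widehat{\mathbb{Z}}$, the limit $\lim_{i\to\infty} f^{n_i}(x)$ exists in $\widehat{\mathbb{Z}}$ and depends only on $s$. (Equivalently, each map $n \mapsto f^n(x)$ extends continuously to the profinite completion $\widehat{\mathbb{N}} = \mathbb{N} \sqcup \widehat{\mathbb{Z}}$ of $(\mathbb{N},+)$.) *)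

theory Defs
  imports "HOL-Analysis.Analysis"
begin

text \<open>An element of the profinite completion of the integers is represented by its
compatible family of residues: x n is the residue (in 0..n-1) of x modulo n, for every
positive n; the entry at 0 is normalised to 0.\<close>

typedef zhat = "{x :: nat \<Rightarrow> int. x 0 = 0 \<and> (\<forall>n>0. 0 \<le> x n \<and> x n < int n) \<and>
                 (\<forall>m n. 0 < m \<longrightarrow> n dvd m \<longrightarrow> x m mod int n = x n)}"
  by (rule exI[of _ "\<lambda>_. 0"]) auto

text \<open>The congruence s \<equiv>_n t, i.e. s - t \<in> n Zhat, i.e. s and t have the same image
in Zhat / n Zhat = Z / n Z.\<close>
definition zcong :: "nat \<Rightarrow> zhat \<Rightarrow> zhat \<Rightarrow> bool" where
  "zcong n s t \<longleftrightarrow> Rep_zhat s n = Rep_zhat t n"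

definition zhat_of_nat :: "nat \<Rightarrow> zhat" where
  "zhat_of_nat k = Abs_zhat (\<lambda>n. if n = 0 then 0 else int k mod int n)"

lemma zcong_mult_left:
  assumes "0 < a" "0 < b" "zcong (a * b) s t"
  shows "zcong a s t"
proof -
  have P: "\<And>m n. 0 < m \<Longrightarrow> n dvd m \<Longrightarrow> Rep_zhat u m mod int n = Rep_zhat u n" for u
    using Rep_zhat[of u] by auto
  have "Rep_zhat s a = Rep_zhat s (a*b) mod int a" using P[of "a*b" a s] assms by simp
  also have "\<dots> = Rep_zhat t (a*b) mod int a" using assms unfolding zcong_def by simp
  also have "\<dots> = Rep_zhat t a" using P[of "a*b" a t] assms by simp
  finally show ?thesis unfolding zcong_def .
qed

instantiation zhat :: topological_space
begin

definition open_zhat :: "zhat set \<Rightarrow> bool" where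
  "open_zhat U \<longleftrightarrow> (\<forall>x\<in>U. \<exists>m>0. \<forall>y. zcong m x y \<longrightarrow> y \<in> U)"

instance
proof
  show "open (UNIV :: zhat set)" unfolding open_zhat_def
    by (intro ballI exI[of _ "1::nat"]) simp
next
  fix S T :: "zhat set"
  assume S: "open S" and T: "open T"
  show "open (S \<inter> T)" unfolding open_zhat_def
  proof
    fix x assume "x \<in> S \<inter> T"
    then obtain a b where a: "a > 0" "\<forall>y. zcong a x y \<longrightarrow> y \<in> S"
      and b: "b > 0" "\<forall>y. zcong b x y \<longrightarrow> y \<in> T"
      using S T unfolding open_zhat_def by blast
    have "\<forall>y. zcong (a*b) x y \<longrightarrow> y \<in> S \<inter> T"
    proof (intro allI impI)
      fix y assume c: "zcong (a*b) x y"
      have "zcong a x y" using zcong_mult_left[OF a(1) b(1) c] .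
      moreover have "zcong b x y"
        using zcong_mult_left[OF b(1) a(1), of x y] c by (simp add: mult.commute)
      ultimately show "y \<in> S \<inter> T" using a(2) b(2) by blast
    qed
    moreover have "a * b > 0" using a(1) b(1) by simp
    ultimately show "\<exists>m>0. \<forall>y. zcong m x y \<longrightarrow> y \<in> S \<inter> T" by blast
  qed
next
  fix K :: "zhat set set"
  assume "\<forall>S\<in>K. open S"
  then show "open (\<Union>K)" unfolding open_zhat_def
    by (meson UnionE UnionI)
qed

end

definition is_period_map :: "(zhat \<Rightarrow> zhat) \<Rightarrow> (nat \<Rightarrow> nat) \<Rightarrow> bool" where
  "is_period_map f P \<longleftrightarrow>
     (\<forall>n>0. P n > 0 \<and> (\<forall>s t. zcong (P n) s t \<longrightarrow> zcong n (f s) (f t)))"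

definition congruence_stable :: "(zhat \<Rightarrow> zhat) \<Rightarrow> bool" where
  "congruence_stable f \<longleftrightarrow> continuous_on UNIV f \<and>
     (\<exists>P. is_period_map f P \<and> (\<forall>n>0. \<exists>K. \<forall>k\<ge>K. (P ^^ k) n = (P ^^ Suc k) n))"

definition profinite_preperiodic :: "(zhat \<Rightarrow> zhat) \<Rightarrow> bool" where
  "profinite_preperiodic f \<longleftrightarrow>
     (\<forall>x s. \<exists>L. \<forall>ns :: nat \<Rightarrow> nat.
        (\<forall>i. 0 < ns i) \<longrightarrow>
        filterlim (\<lambda>i. real (ns i)) at_top sequentially \<longrightarrow>
        (\<lambda>i. zhat_of_nat (ns i)) \<longlonglongrightarrow> s \<longrightarrow>
        (\<lambda>i. (f ^^ ns i) x) \<longlonglongrightarrow> L)"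

end

theory Submission
  imports Defs
begin

lemma Rep_props:
  shows "Rep_zhat u 0 = 0"
    and "0 < n \<Longrightarrow> 0 \<le> Rep_zhat u n \<and> Rep_zhat u n < int n"
    and "0 < m \<Longrightarrow> n dvd m \<Longrightarrow> Rep_zhat u m mod int n = Rep_zhat u n"
  using Rep_zhat[of u] by auto

lemma zcong_refl: "zcong n a a" by (simp add: zcong_def)
lemma zcong_sym: "zcong n a b \<Longrightarrow> zcong n b a" by (simp add: zcong_def)
lemma zcong_trans: "zcong n a b \<Longrightarrow> zcong n b c \<Longrightarrow> zcong n a c" by (simp add: zcong_def)

lemma Rep_zhat_of_nat:
  assumes "0 < n" shows "Rep_zhat (zhat_of_nat k) n = int k mod int n"
proof -
  have "(\<lambda>n. if n = 0 then 0 else int k mod int n) \<in>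
     {x :: nat \<Rightarrow> int. x 0 = 0 \<and> (\<forall>n>0. 0 \<le> x n \<and> x n < int n) \<and>
                 (\<forall>m n. 0 < m \<longrightarrow> n dvd m \<longrightarrow> x m mod int n = x n)}"
    by (auto simp: mod_mod_cancel)
  then show ?thesis unfolding zhat_of_nat_def using assms
    by (simp add: Abs_zhat_inverse)
qed

lemma tendsto_zhat_iff:
  "(a \<longlongrightarrow> L) F \<longleftrightarrow> (\<forall>m>0. eventually (\<lambda>i. zcong m (a i) L) F)"
proof
  assume A: "(a \<longlongrightarrow> L) F"
  show "\<forall>m>0. eventually (\<lambda>i. zcong m (a i) L) F"
  proof (intro allI impI)
    fix m :: nat assume m: "0 < m"
    have "open {y. zcong m y L}" unfolding open_zhat_def
      using m zcong_trans zcong_sym by blast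
    moreover have "L \<in> {y. zcong m y L}" by (simp add: zcong_refl)
    ultimately have "eventually (\<lambda>i. a i \<in> {y. zcong m y L}) F"
      using topological_tendstoD[OF A] by blast
    then show "eventually (\<lambda>i. zcong m (a i) L) F" by simp
  qed
next
  assume A: "\<forall>m>0. eventually (\<lambda>i. zcong m (a i) L) F"
  show "(a \<longlongrightarrow> L) F"
  proof (rule topological_tendstoI)
    fix S assume "open S" "L \<in> S"
    then obtain m where m: "m > 0" "\<forall>y. zcong m L y \<longrightarrow> y \<in> S"
      unfolding open_zhat_def by blast
    show "eventually (\<lambda>i. a i \<in> S) F"
      using A m eventually_mono zcong_sym by (metis (mono_tags, lifting))
  qed
qed

lemma zcong_dvd: "0 < m \<Longrightarrow> n dvd m \<Longrightarrow> zcong m a b \<Longrightarrow> zcong n a b"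
  by (metis Rep_props(3) zcong_def)

lemma periodic:
  assumes per: "is_period_map f P"
    and stab: "\<forall>n>0. \<exists>K. \<forall>k\<ge>K. (P ^^ k) n = (P ^^ Suc k) n"
    and n: "0 < n"
  shows "\<exists>k0 Q. Q > 0 \<and> (\<forall>k\<ge>k0. zcong n ((f^^(k+Q)) x) ((f^^k) x))"
proof -
  have Ppos: "\<And>n. 0 < n \<Longrightarrow> 0 < P n" using per unfolding is_period_map_def by blast
  have Pf: "\<And>n s t. 0 < n \<Longrightarrow> zcong (P n) s t \<Longrightarrow> zcong n (f s) (f t)"
    using per unfolding is_period_map_def by blast
  have Aall: "\<And>n s t. 0 < n \<Longrightarrow> zcong ((P^^k) n) s t \<Longrightarrow> zcong n ((f^^k) s) ((f^^k) t)" for k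
  proof (induction k)
    case 0 then show ?case by simp
  next
    case (Suc k)
    have "(P^^Suc k) n = (P^^k) (P n)" by (simp only: funpow_Suc_right comp_def)
    then have "zcong (P n) ((f^^k) s) ((f^^k) t)" using Suc Ppos by metis
    then show ?case using Pf Suc.prems(1) by simp
  qed
  obtain K where K: "\<forall>k\<ge>K. (P ^^ k) n = (P ^^ Suc k) n" using stab n by blast
  define N where "N = (P^^K) n"
  have Nposk: "\<And>k. 0 < (P^^k) n"
  proof -
    fix k show "0 < (P^^k) n" by (induction k) (auto simp: n Ppos)
  qed
  have Npos: "0 < N" unfolding N_def by (rule Nposk)
  have PN: "P N = N" using K unfolding N_def by simp
  have fN: "zcong N s t \<Longrightarrow> zcong N (f s) (f t)" for s t using Pf[OF Npos] PN by simp
  have fNj: "zcong N s t \<Longrightarrow> zcong N ((f^^j) s) ((f^^j) t)" for s t j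
    by (induction j) (auto intro: fN)
  define g where "g = (\<lambda>k. Rep_zhat ((f^^k) x) N)"
  have "range g \<subseteq> {0..<int N}" unfolding g_def using Rep_props(2)[OF Npos] by auto
  then have "finite (range g)" using finite_subset by blast
  then have "\<not> inj g" using finite_imageD by (metis infinite_UNIV_nat)
  then obtain i j where ij: "i \<noteq> j" "g i = g j" unfolding inj_def by blast
  obtain a b where ab: "a < b" "g a = g b"
    using ij by (metis linorder_neqE_nat)
  define p where "p = b - a"
  have pp: "p > 0" using ab unfolding p_def by simp
  have cab: "zcong N ((f^^b) x) ((f^^a) x)" using ab unfolding g_def zcong_def by simp
  have perN: "zcong N ((f^^(k+p)) x) ((f^^k) x)" if "k \<ge> a" for k
  proof -
    have "k + p = (k-a) + b" using that ab by (simp add: p_def)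
    then have e1: "(f^^(k+p)) x = (f^^(k-a)) ((f^^b) x)"
      by (simp only: funpow_add comp_def)
    have "k = (k-a) + a" using that by simp
    then have e2: "(f^^k) x = (f^^(k-a)) ((f^^a) x)"
      by (metis funpow_add comp_apply)
    show ?thesis using fNj[OF cab] e1 e2 by simp
  qed
  have "\<forall>k\<ge>a+K. zcong n ((f^^(k+p)) x) ((f^^k) x)"
  proof (intro allI impI)
    fix k assume k: "k \<ge> a + K"
    have "zcong N ((f^^(k-K+p)) x) ((f^^(k-K)) x)" using perN[of "k-K"] k by linarith
    then have "zcong n ((f^^K) ((f^^(k-K+p)) x)) ((f^^K) ((f^^(k-K)) x))"
      using Aall[OF n] unfolding N_def by blast
    moreover have "K + (k-K+p) = k + p" "K + (k - K) = k" using k by auto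
    then have "(f^^K) ((f^^(k-K+p)) x) = (f^^(k+p)) x" "(f^^K) ((f^^(k-K)) x) = (f^^k) x"
      by (metis funpow_add comp_apply)+
    ultimately show "zcong n ((f^^(k+p)) x) ((f^^k) x)" by simp
  qed
  then show ?thesis using pp by blast
qed

lemma periodic2:
  assumes per: "is_period_map f P"
    and stab: "\<forall>n>0. \<exists>K. \<forall>k\<ge>K. (P ^^ k) n = (P ^^ Suc k) n"
    and n: "0 < n"
  shows "\<exists>k0 Q. Q > 0 \<and> (\<forall>k k'. k0 \<le> k \<longrightarrow> k0 \<le> k' \<longrightarrow> k mod Q = k' mod Q \<longrightarrow>
            zcong n ((f^^k) x) ((f^^k') x))"
proof -
  obtain k0 Q where Q: "Q > 0" "\<forall>k\<ge>k0. zcong n ((f^^(k+Q)) x) ((f^^k) x)"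
    using periodic[OF per stab n] by blast
  have step: "k0 \<le> k \<Longrightarrow> zcong n ((f^^(k + t*Q)) x) ((f^^k) x)" for k t
  proof (induction t)
    case 0 then show ?case by (simp add: zcong_refl)
  next
    case (Suc t)
    have "zcong n ((f^^(k + t*Q + Q)) x) ((f^^(k + t*Q)) x)" using Q(2) Suc.prems by simp
    moreover have "k + Suc t * Q = k + t*Q + Q" by simp
    ultimately show ?case using Suc zcong_trans by metis
  qed
  have main: "k0 \<le> k \<Longrightarrow> k \<le> k' \<Longrightarrow> k mod Q = k' mod Q \<Longrightarrow> zcong n ((f^^k) x) ((f^^k') x)" for k k'
  proof -
    assume a: "k0 \<le> k" "k \<le> k'" "k mod Q = k' mod Q"
    then have "Q dvd k' - k" using mod_eq_dvd_iff_nat by metis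
    then obtain t where "k' - k = Q * t" by blast
    then have "k' = k + t*Q" using a by (simp add: mult.commute)
    then show ?thesis using step[OF a(1), of t] zcong_sym by simp
  qed
  show ?thesis
    apply (rule exI[of _ k0], rule exI[of _ Q])
    using Q(1) main zcong_sym by (metis nle_le)
qed

theorem theorem3p7:
  fixes f :: "zhat \<Rightarrow> zhat"
  assumes "continuous_on UNIV f"
    and "congruence_stable f"
  shows "profinite_preperiodic f"
  unfolding profinite_preperiodic_def
proof (intro allI)
  fix x s
  obtain P where per: "is_period_map f P"
    and stab: "\<forall>n>0. \<exists>K. \<forall>k\<ge>K. (P ^^ k) n = (P ^^ Suc k) n"
    using assms(2) unfolding congruence_stable_def by blast
  define adm where "adm = (\<lambda>ns :: nat \<Rightarrow> nat. (\<forall>i. 0 < ns i) \<and>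
        filterlim (\<lambda>i. real (ns i)) at_top sequentially \<and>
        (\<lambda>i. zhat_of_nat (ns i)) \<longlonglongrightarrow> s)"
  have ev: "\<exists>I. \<forall>i\<ge>I. k0 \<le> ns i \<and> ns i mod Q = nat (Rep_zhat s Q)"
    if "adm ns" "Q > 0" for ns k0 Q
  proof -
    have e1: "eventually (\<lambda>i. real (ns i) \<ge> real k0) sequentially"
      using that(1) unfolding adm_def filterlim_at_top by blast
    have e2: "eventually (\<lambda>i. zcong Q (zhat_of_nat (ns i)) s) sequentially"
      using that unfolding adm_def tendsto_zhat_iff by blast
    have "eventually (\<lambda>i. k0 \<le> ns i \<and> ns i mod Q = nat (Rep_zhat s Q)) sequentially"
    proof (rule eventually_mono[OF eventually_conj[OF e1 e2]])
      fix i assume a: "real k0 \<le> real (ns i) \<and> zcong Q (zhat_of_nat (ns i)) s"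
      then have "int (ns i) mod int Q = Rep_zhat s Q"
        unfolding zcong_def using Rep_zhat_of_nat[OF that(2)] by simp
      then have "int (ns i mod Q) = Rep_zhat s Q" by (simp add: zmod_int)
      then show "k0 \<le> ns i \<and> ns i mod Q = nat (Rep_zhat s Q)" using a by auto
    qed
    then show ?thesis unfolding eventually_sequentially by blast
  qed
  have claim: "\<exists>I. \<forall>i\<ge>I. \<forall>j\<ge>I. zcong n ((f^^(ns i)) x) ((f^^(ms j)) x)"
    if hh: "adm ns" "adm ms" "0 < n" for ns ms n
  proof -
    obtain k0 Q where Q: "Q > 0" "\<forall>k k'. k0 \<le> k \<longrightarrow> k0 \<le> k' \<longrightarrow> k mod Q = k' mod Q \<longrightarrow>
            zcong n ((f^^k) x) ((f^^k') x)"
      using periodic2[OF per stab hh(3)] by blast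
    obtain I1 where I1: "\<forall>i\<ge>I1. k0 \<le> ns i \<and> ns i mod Q = nat (Rep_zhat s Q)"
      using ev[OF hh(1) Q(1)] by blast
    obtain I2 where I2: "\<forall>i\<ge>I2. k0 \<le> ms i \<and> ms i mod Q = nat (Rep_zhat s Q)"
      using ev[OF hh(2) Q(1)] by blast
    show ?thesis
      apply (rule exI[of _ "max I1 I2"])
      using I1 I2 Q(2) by simp
  qed
  show "\<exists>L. \<forall>ns. (\<forall>i. 0 < ns i) \<longrightarrow> filterlim (\<lambda>i. real (ns i)) at_top sequentially \<longrightarrow>
          (\<lambda>i. zhat_of_nat (ns i)) \<longlonglongrightarrow> s \<longrightarrow> (\<lambda>i. (f ^^ ns i) x) \<longlonglongrightarrow> L"
  proof (cases "\<exists>ns0. adm ns0")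
    case False
    then show ?thesis unfolding adm_def by blast
  next
    case True
    then obtain ns0 where a0: "adm ns0" by blast
    define I where "I = (\<lambda>n. SOME I. \<forall>i\<ge>I. \<forall>j\<ge>I. zcong n ((f^^(ns0 i)) x) ((f^^(ns0 j)) x))"
    have I: "\<forall>i\<ge>I n. \<forall>j\<ge>I n. zcong n ((f^^(ns0 i)) x) ((f^^(ns0 j)) x)" if "0 < n" for n
      unfolding I_def by (rule someI_ex, rule claim[OF a0 a0 that])
    define Lr where "Lr = (\<lambda>n. if n = 0 then 0 else Rep_zhat ((f^^(ns0 (I n))) x) n)"
    have "Lr \<in> {x :: nat \<Rightarrow> int. x 0 = 0 \<and> (\<forall>n>0. 0 \<le> x n \<and> x n < int n) \<and>
                 (\<forall>m n. 0 < m \<longrightarrow> n dvd m \<longrightarrow> x m mod int n = x n)}"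
    proof (intro CollectI conjI allI impI)
      show "Lr 0 = 0" unfolding Lr_def by simp
    next
      fix n :: nat assume "0 < n"
      then show "0 \<le> Lr n" "Lr n < int n" unfolding Lr_def using Rep_props(2) by auto
    next
      fix m n :: nat assume mn: "0 < m" "n dvd m"
      then have n: "0 < n" by (metis dvd_0_left_iff gr0I less_irrefl)
      define j where "j = max (I m) (I n)"
      have c1: "zcong m ((f^^(ns0 (I m))) x) ((f^^(ns0 j)) x)" using I[OF mn(1)] j_def by simp
      have c2: "zcong n ((f^^(ns0 (I n))) x) ((f^^(ns0 j)) x)" using I[OF n] j_def by simp
      have c3: "zcong n ((f^^(ns0 (I m))) x) ((f^^(ns0 (I n))) x)"
        using zcong_dvd[OF mn c1] c2 zcong_sym zcong_trans by blast
      show "Lr m mod int n = Lr n"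
        unfolding Lr_def using mn n Rep_props(3)[OF mn] c3 unfolding zcong_def by simp
    qed
    then have RL: "0 < n \<Longrightarrow> Rep_zhat (Abs_zhat Lr) n = Rep_zhat ((f^^(ns0 (I n))) x) n" for n
      by (simp add: Abs_zhat_inverse Lr_def)
    show ?thesis
    proof (rule exI[of _ "Abs_zhat Lr"], intro allI impI)
      fix ns assume "(\<forall>i. 0 < ns i)" "filterlim (\<lambda>i. real (ns i)) at_top sequentially"
          "(\<lambda>i. zhat_of_nat (ns i)) \<longlonglongrightarrow> s"
      then have an: "adm ns" unfolding adm_def by blast
      show "(\<lambda>i. (f ^^ ns i) x) \<longlonglongrightarrow> Abs_zhat Lr"
        unfolding tendsto_zhat_iff
      proof (intro allI impI)
        fix m :: nat assume m: "0 < m"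
        obtain J where J: "\<forall>i\<ge>J. \<forall>j\<ge>J. zcong m ((f^^(ns i)) x) ((f^^(ns0 j)) x)"
          using claim[OF an a0 m] by blast
        define j where "j = max J (I m)"
        have c2: "zcong m ((f^^(ns0 j)) x) (Abs_zhat Lr)"
          using I[OF m] RL[OF m] j_def unfolding zcong_def by simp
        show "eventually (\<lambda>i. zcong m ((f^^(ns i)) x) (Abs_zhat Lr)) sequentially"
          unfolding eventually_sequentially
          using J c2 j_def zcong_trans by (metis max.cobounded1)
      qed
    qed
  qed
qed

end
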